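(* For integers $r\geq1$, $p\geq2$, $k_1\geq2$ and $k_2,\ldots,k_r\geq1$, \[ \lim_{m\to\infty}\zeta^{\star}(k_1,\ldots,k_r,\{p\}^m)=\zeta^{\star}(k_1,\ldots,k_{r-1})+\sum_{n_1\geq\cdots\geq n_r\geq2}\frac{1}{n_1^{k_1}\cdots n_r^{k_r}}\prod_{l=2}^{n_r}\frac{l^p}{l^p-1}. \]
   Context: $\zeta^{\star}(k_1,\ldots,k_r)=\sum_{n_1\geq\cdots\geq n_r\geq 1}\frac{1}{n_1^{k_1}\cdots n_r^{k_r}}$ for $k_1\geq2$, $k_2,\ldots,k_r\geq1$; $\{p\}^m$ denotes $m$ consecutive arguments equal to $p$. For $r=1$, $\zeta^{\star}(k_1,\ldots,k_{r-1})$ is the empty value, interpreted as $1$. *)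

theory Defs
  imports "HOL-Analysis.Analysis"
begin

definition dec_tuples :: "nat \<Rightarrow> nat \<Rightarrow> nat list set" where
  "dec_tuples r b = {ns. length ns = r \<and> sorted_wrt (\<ge>) ns \<and> (\<forall>n\<in>set ns. b \<le> n)}"

definition zeta_term :: "nat list \<Rightarrow> nat list \<Rightarrow> real" where
  "zeta_term ks ns = (\<Prod>i<length ks. 1 / real (ns ! i) ^ (ks ! i))"

text \<open>Multiple zeta-star value; for the empty list it equals 1 (index set is {[]}).\<close>
definition zeta_star :: "nat list \<Rightarrow> real" where
  "zeta_star ks = (\<Sum>\<^sub>\<infinity> ns \<in> dec_tuples (length ks) 1. zeta_term ks ns)"

end

theory Submission
  imports Defs
begin

lemma zt_Nil[simp]: "zeta_term [] ns = 1"
  by (simp add: zeta_term_def)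

lemma zt_Cons[simp]: "zeta_term (k#ks) (n#ns) = 1 / real n ^ k * zeta_term ks ns"
  by (simp add: zeta_term_def prod.lessThan_Suc_shift del: prod.lessThan_Suc)

lemma zt_append:
  "length ks1 = length ns1 \<Longrightarrow> zeta_term (ks1 @ ks2) (ns1 @ ns2) = zeta_term ks1 ns1 * zeta_term ks2 ns2"
proof (induction ks1 arbitrary: ns1)
  case Nil then show ?case by simp
next
  case (Cons k ks1)
  then obtain n ns where "ns1 = n # ns" by (cases ns1) auto
  with Cons show ?case by simp
qed

lemma zt_nonneg: "0 \<le> zeta_term ks ns"
  by (simp add: zeta_term_def prod_nonneg)

fun hh :: "nat \<Rightarrow> nat \<Rightarrow> nat \<Rightarrow> real" where
  "hh p 0 N = 1"
| "hh p (Suc m) N = (\<Sum>j=1..N. 1 / real j ^ p * hh p m j)"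

declare hh.simps(2)[simp del]

lemma hh_nonneg: "0 \<le> hh p m N"
  by (induction m arbitrary: N) (auto intro!: sum_nonneg simp: hh.simps)

lemma hh_one: "hh p m (Suc 0) = 1"
  by (induction m) (auto simp: hh.simps)

lemma hh_rec: "hh p (Suc m) (Suc N) = hh p (Suc m) N + 1 / real (Suc N) ^ p * hh p m (Suc N)"
  by (simp add: hh.simps)

definition PP :: "nat \<Rightarrow> nat \<Rightarrow> real" where
  "PP p N = (\<Prod>l=2..N. real l ^ p / (real l ^ p - 1))"

lemma PP_Suc: "1 \<le> N \<Longrightarrow> PP p (Suc N) = PP p N * (real (Suc N) ^ p / (real (Suc N) ^ p - 1))"
  by (simp add: PP_def)

lemma PP_one: "PP p (Suc 0) = 1"
proof -
  have "{2..Suc 0} = ({}::nat set)" by auto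
  then show ?thesis by (simp add: PP_def)
qed

lemma pow_gt1: assumes "p \<ge> 1" "l \<ge> 2" shows "real l ^ p > 1"
proof -
  have "real l ^ p \<ge> real l ^ 1" using assms by (intro power_increasing) auto
  then show ?thesis using assms by simp
qed

lemma PP_ge1: assumes "p \<ge> 1" shows "1 \<le> PP p N"
  unfolding PP_def
proof (rule prod_ge_1)
  fix l assume "l \<in> {2..N}"
  then have "real l ^ p > 1" using pow_gt1 assms by auto
  then show "1 \<le> real l ^ p / (real l ^ p - 1)" by (simp add: field_simps)
qed

lemma aux_alg: fixes n::real assumes "n>0" shows "2*n/(n+1) * ((n+1)^2/(n*(n+2))) = 2*(n+1)/((n+1)+1)"
proof -
  have h: "n+1 \<noteq> 0" "n \<noteq> 0" "n+2\<noteq>0" "n+1+1 \<noteq> 0" using assms by auto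
  have "2*n/(n+1) * ((n+1)^2/(n*(n+2))) = (2*n*(n+1)^2) / ((n+1)*(n*(n+2)))" by simp
  also have "\<dots> = (2*(n+1)) * (n*(n+1)) / ((n+2) * (n*(n+1)))" by (simp add: power2_eq_square algebra_simps)
  also have "\<dots> = 2*(n+1)/(n+2)" using h by (subst mult_divide_mult_cancel_right) auto
  finally show ?thesis by (simp add: add.assoc)
qed

lemma PP_le2: assumes "p \<ge> 2" "N \<ge> 1" shows "PP p N \<le> 2 * real N / (real N + 1)"
  using assms(2)
proof (induction N rule: nat_induct_at_least)
  case base then show ?case by (simp add: PP_one)
next
  case (Suc N)
  define a where "a = real (Suc N) ^ p"
  have a2: "a \<ge> real (Suc N) ^ 2" unfolding a_def using assms Suc by (intro power_increasing) auto
  have a1: "a > 1" unfolding a_def using pow_gt1[of p "Suc N"] assms Suc by auto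
  have f: "a / (a - 1) \<le> real (Suc N)^2 / (real (Suc N)^2 - 1)"
  proof -
    have "real (Suc N) > 1" using Suc by simp
    then have "(real (Suc N))^2 > 1" by (rule one_less_power) simp
    then show ?thesis using a1 a2 by (simp add: field_simps)
  qed
  have "PP p (Suc N) = PP p N * (a / (a - 1))" using PP_Suc Suc a_def by simp
  also have "\<dots> \<le> 2 * real N / (real N + 1) * (real (Suc N)^2 / (real (Suc N)^2 - 1))"
    using Suc f a1 PP_ge1[of p N] assms by (intro mult_mono) (auto simp: field_simps)
  also have "\<dots> = 2 * real (Suc N) / (real (Suc N) + 1)"
  proof -
    have nz: "real N > 0" using Suc by simp
    have s1: "real (Suc N) = real N + 1" by simp
    have e: "(real N + 1)^2 - 1 = real N * (real N + 2)" by (simp add: power2_eq_square algebra_simps)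
    show ?thesis unfolding s1 e by (rule aux_alg[OF nz])
  qed
  finally show ?case .
qed

lemma PP_bound: assumes "p \<ge> 2" "N \<ge> 1" shows "PP p N \<le> 2"
proof -
  have "2 * real N / (real N + 1) \<le> 2" by (simp add: field_simps)
  then show ?thesis using PP_le2[OF assms] by linarith
qed

lemma hh_le_PP: assumes "p \<ge> 1" "N \<ge> 1" shows "hh p m N \<le> PP p N"
  using assms(2)
proof (induction N arbitrary: m rule: nat_induct_at_least)
  case base then show ?case by (simp add: hh_one PP_one)
next
  case (Suc N)
  define a where "a = real (Suc N) ^ p"
  have a1: "a > 1" unfolding a_def using pow_gt1[of p "Suc N"] assms Suc by auto
  have P: "PP p (Suc N) = PP p N * (a / (a - 1))" using PP_Suc Suc a_def by simp
  show ?case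
  proof (induction m)
    case 0 then show ?case using PP_ge1 assms by simp
  next
    case (Suc m)
    have "hh p (Suc m) (Suc N) = hh p (Suc m) N + 1 / a * hh p m (Suc N)"
      unfolding a_def by (rule hh_rec)
    also have "\<dots> \<le> PP p N + 1 / a * PP p (Suc N)"
      using Suc.IH \<open>\<And>m. hh p m N \<le> PP p N\<close> a1 by (intro add_mono mult_left_mono) auto
    also have "\<dots> = PP p (Suc N)" using a1 unfolding P by (simp add: field_simps)
    finally show ?case .
  qed
qed

lemma hh_mono: assumes "N \<ge> 1" shows "hh p m N \<le> hh p (Suc m) N"
  using assms
proof (induction N arbitrary: m rule: nat_induct_at_least)
  case base then show ?case by (simp add: hh_one)
next
  case (Suc N)
  show ?case
  proof (induction m)
    case 0
    have "hh p 0 (Suc N) = hh p 0 N" by simp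
    also have "\<dots> \<le> hh p 1 N" using Suc.IH[of 0] by simp
    also have "\<dots> \<le> hh p 1 (Suc N)" using hh_rec[of p 0 N] by simp
    finally show ?case by simp
  next
    case (Suc m)
    have "hh p (Suc m) (Suc N) = hh p (Suc m) N + 1 / real (Suc N) ^ p * hh p m (Suc N)"
      by (rule hh_rec)
    also have "\<dots> \<le> hh p (Suc (Suc m)) N + 1 / real (Suc N) ^ p * hh p (Suc m) (Suc N)"
      using Suc.IH \<open>\<And>m. hh p m N \<le> hh p (Suc m) N\<close> by (intro add_mono mult_left_mono) auto
    also have "\<dots> = hh p (Suc (Suc m)) (Suc N)" by (rule hh_rec[symmetric])
    finally show ?case .
  qed
qed

lemma hh_lim: assumes "p \<ge> 1" "N \<ge> 1" shows "(\<lambda>m. hh p m N) \<longlonglongrightarrow> PP p N"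
  using assms(2)
proof (induction N rule: nat_induct_at_least)
  case base then show ?case by (simp add: hh_one PP_one)
next
  case (Suc N)
  define a where "a = real (Suc N) ^ p"
  have a1: "a > 1" unfolding a_def using pow_gt1[of p "Suc N"] assms Suc by auto
  have P: "PP p (Suc N) = PP p N * (a / (a - 1))" using PP_Suc Suc a_def by simp
  have inc: "incseq (\<lambda>m. hh p m (Suc N))" by (rule incseq_SucI) (rule hh_mono, simp)
  have bnd: "\<forall>i. hh p i (Suc N) \<le> PP p (Suc N)" using hh_le_PP[OF assms(1)] by simp
  obtain L where L: "(\<lambda>m. hh p m (Suc N)) \<longlonglongrightarrow> L"
    using incseq_convergent[OF inc bnd] by blast
  have "(\<lambda>m. hh p (Suc m) (Suc N)) \<longlonglongrightarrow> L" using L by (rule LIMSEQ_Suc)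
  moreover have "(\<lambda>m. hh p (Suc m) (Suc N)) \<longlonglongrightarrow> PP p N + 1 / a * L"
    unfolding hh_rec a_def[symmetric]
    by (intro tendsto_intros LIMSEQ_Suc[OF Suc.IH] L)
  ultimately have "L = PP p N + 1 / a * L" by (rule LIMSEQ_unique)
  then have "L = PP p (Suc N)" using a1 unfolding P by (simp add: field_simps)
  then show ?case using L by simp
qed


definition CH :: "nat \<Rightarrow> nat \<Rightarrow> nat list set" where
  "CH m N = {b \<in> dec_tuples m 1. \<forall>e\<in>set b. e \<le> N}"

lemma CH_finite: "finite (CH m N)"
proof (rule finite_subset)
  show "CH m N \<subseteq> {xs. set xs \<subseteq> {0..N} \<and> length xs = m}"
    by (auto simp: CH_def dec_tuples_def)
qed (rule finite_lists_length_eq, simp)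

lemma CH_0: "CH 0 N = {[]}"
  by (auto simp: CH_def dec_tuples_def)

lemma CH_Suc: "CH (Suc m) N = (\<lambda>(j,b). j#b) ` (SIGMA j:{1..N}. CH m j)"
proof (intro equalityI subsetI)
  fix b assume b: "b \<in> CH (Suc m) N"
  then obtain j b' where bj: "b = j # b'" by (cases b) (auto simp: CH_def dec_tuples_def)
  have "(j, b') \<in> (SIGMA j:{1..N}. CH m j)"
    using b unfolding bj by (auto simp: CH_def dec_tuples_def)
  then show "b \<in> (\<lambda>(j,b). j#b) ` (SIGMA j:{1..N}. CH m j)" unfolding bj by force
next
  fix b assume "b \<in> (\<lambda>(j,b). j#b) ` (SIGMA j:{1..N}. CH m j)"
  then show "b \<in> CH (Suc m) N" by (force simp: CH_def dec_tuples_def)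
qed

lemma chainsum: "(\<Sum>b\<in>CH m N. zeta_term (replicate m p) b) = hh p m N"
proof (induction m arbitrary: N)
  case 0 then show ?case by (simp add: CH_0)
next
  case (Suc m)
  have inj: "inj_on (\<lambda>(j,b). j#b) (SIGMA j:{1..N}. CH m j)" by (auto simp: inj_on_def)
  have "(\<Sum>b\<in>CH (Suc m) N. zeta_term (replicate (Suc m) p) b)
      = (\<Sum>(j,b)\<in>(SIGMA j:{1..N}. CH m j). zeta_term (replicate (Suc m) p) (j#b))"
    unfolding CH_Suc by (subst sum.reindex[OF inj]) (simp add: case_prod_unfold)
  also have "\<dots> = (\<Sum>j=1..N. \<Sum>b\<in>CH m j. 1 / real j ^ p * zeta_term (replicate m p) b)"
    by (subst sum.Sigma[symmetric]) (auto simp: CH_finite)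
  also have "\<dots> = (\<Sum>j=1..N. 1 / real j ^ p * hh p m j)"
    by (intro sum.cong refl) (simp only: sum_distrib_left[symmetric] Suc.IH)
  also have "\<dots> = hh p (Suc m) N" by (simp add: hh.simps)
  finally show ?case .
qed


lemma inv_prod_bound:
  fixes t :: real
  assumes "t \<ge> 0" "M \<ge> 1" "\<forall>n\<in>set rest. 1 \<le> n \<and> n \<le> M"
  shows "prod_list (map (\<lambda>n. 1 / real n) rest)
         \<le> real M powr (t * real (length rest)) * prod_list (map (\<lambda>n. real n powr (-(1+t))) rest)"
  using assms(3)
proof (induction rest)
  case Nil then show ?case using assms by simp
next
  case (Cons n rest)
  have n1: "1 \<le> n" "n \<le> M" using Cons.prems by auto
  have key: "1 / real n \<le> real M powr t * real n powr (-(1+t))"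
  proof -
    have e1: "real n powr (-(1+t)) = inverse (real n powr (1+t))" by (rule powr_minus)
    have e2: "real n powr (1+t) = real n * real n powr t" using n1 by (simp add: powr_add)
    have e3: "real n powr (-(1+t)) = (1 / real n) * (1 / real n powr t)"
      unfolding e1 e2 by (simp add: field_simps)
    moreover have "real n powr t \<le> real M powr t" using n1 assms by (intro powr_mono2) auto
    moreover have "real n powr t > 0" using n1 by simp
    ultimately have q: "1 \<le> real M powr t / real n powr t" by simp
    have "1 / real n * 1 \<le> 1 / real n * (real M powr t / real n powr t)"
      by (rule mult_left_mono[OF q]) simp
    also have "\<dots> = real M powr t * ((1 / real n) * (1 / real n powr t))" by simp
    finally show ?thesis using e3 by simp
  qed
  have IH: "prod_list (map (\<lambda>n. 1 / real n) rest)
         \<le> real M powr (t * real (length rest)) * prod_list (map (\<lambda>n. real n powr (-(1+t))) rest)"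
    using Cons by auto
  have "prod_list (map (\<lambda>n. 1 / real n) (n # rest)) = 1 / real n * prod_list (map (\<lambda>n. 1 / real n) rest)"
    by simp
  also have "\<dots> \<le> (real M powr t * real n powr (-(1+t))) *
      (real M powr (t * real (length rest)) * prod_list (map (\<lambda>n. real n powr (-(1+t))) rest))"
    by (intro mult_mono key IH) (auto intro!: prod_list_nonneg)
  also have "\<dots> = real M powr (t * real (length (n # rest))) * prod_list (map (\<lambda>n. real n powr (-(1+t))) (n # rest))"
    by (simp add: distrib_left powr_add)
  finally show ?case .
qed

lemma zt_le_prod_inv:
  "\<forall>k\<in>set ks. k \<ge> 1 \<Longrightarrow> \<forall>n\<in>set ns. n \<ge> 1 \<Longrightarrow> length ks = length ns \<Longrightarrow>
   zeta_term ks ns \<le> prod_list (map (\<lambda>n. 1 / real n) ns)"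
proof (induction ks arbitrary: ns)
  case Nil then show ?case by simp
next
  case (Cons k ks)
  then obtain n ns' where ns: "ns = n # ns'" by (cases ns) auto
  have n1: "n \<ge> 1" "k \<ge> 1" using Cons.prems ns by auto
  have "real n ^ 1 \<le> real n ^ k" using n1 by (intro power_increasing) auto
  then have a: "1 / real n ^ k \<le> 1 / real n" using n1 by (simp add: frac_le)
  have b: "zeta_term ks ns' \<le> prod_list (map (\<lambda>n. 1 / real n) ns')"
    using Cons ns by auto
  have "1 / real n ^ k * zeta_term ks ns' \<le> 1 / real n * prod_list (map (\<lambda>n. 1 / real n) ns')"
    by (rule mult_mono[OF a b]) (auto simp: zt_nonneg)
  then show ?case unfolding ns by simp
qed

lemma zt_bound:
  assumes "ks \<noteq> []" "hd ks \<ge> 2" "\<forall>k\<in>set ks. k \<ge> 1" "ns \<in> dec_tuples (length ks) 1"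
  shows "zeta_term ks ns \<le> prod_list (map (\<lambda>n. real n powr (-(1 + 1 / real (length ks)))) ns)"
proof -
  obtain k1 ks' where ks: "ks = k1 # ks'" using assms(1) by (cases ks) auto
  obtain n1 rest where ns: "ns = n1 # rest" using assms(4) ks by (cases ns) (auto simp: dec_tuples_def)
  define t where "t = 1 / real (length ks)"
  have lr: "length rest = length ks'" using assms(4) ks ns by (auto simp: dec_tuples_def)
  have tr: "t * real (length rest) = 1 - t" unfolding t_def lr ks by (simp add: field_simps)
  have n1: "n1 \<ge> 1" "k1 \<ge> 2" using assms ks ns by (auto simp: dec_tuples_def)
  have rest: "\<forall>n\<in>set rest. 1 \<le> n \<and> n \<le> n1" using assms(4) ns by (auto simp: dec_tuples_def)
  have t0: "t \<ge> 0" by (simp add: t_def)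
  have a: "1 / real n1 ^ k1 \<le> real n1 powr (-2)"
  proof -
    have "real n1 ^ 2 \<le> real n1 ^ k1" using n1 by (intro power_increasing) auto
    then have "1 / real n1 ^ k1 \<le> 1 / real n1 ^ 2" using n1 by (simp add: frac_le)
    also have "\<dots> = real n1 powr (-2)" using n1 by (simp add: powr_minus powr_realpow divide_inverse)
    finally show ?thesis .
  qed
  have b: "zeta_term ks' rest \<le> real n1 powr (t * real (length rest)) * prod_list (map (\<lambda>n. real n powr (-(1+t))) rest)"
    using zt_le_prod_inv[of ks' rest] inv_prod_bound[OF t0 _ rest] assms(3) ks rest lr n1 by force
  have "zeta_term ks ns = 1 / real n1 ^ k1 * zeta_term ks' rest" by (simp add: ks ns)
  also have "\<dots> \<le> real n1 powr (-2) * (real n1 powr (t * real (length rest)) * prod_list (map (\<lambda>n. real n powr (-(1+t))) rest))"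
    by (intro mult_mono a b) (auto intro!: zt_nonneg)
  also have "\<dots> = (real n1 powr (-2) * real n1 powr (1 - t)) * prod_list (map (\<lambda>n. real n powr (-(1+t))) rest)"
    by (simp add: tr)
  also have "real n1 powr (-2) * real n1 powr (1 - t) = real n1 powr (-(1+t))"
    by (simp flip: powr_add)
  finally show ?thesis by (simp add: ns t_def)
qed

lemma w_summable: "(s::real) > 1 \<Longrightarrow> (\<lambda>n::nat. real n powr (-s)) summable_on UNIV"
  by (subst summable_on_UNIV_nonneg_real_iff) (auto simp: summable_real_powr_iff)

lemma prod_summable:
  fixes f :: "'a \<Rightarrow> real"
  assumes nn: "\<And>x. f x \<ge> 0" and sf: "f summable_on A"
  shows "(\<lambda>ns. prod_list (map f ns)) summable_on {ns. length ns = r \<and> set ns \<subseteq> A}"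
proof (induction r)
  case 0
  have "{ns. length ns = 0 \<and> set ns \<subseteq> A} = {[]}" by auto
  then show ?case by simp
next
  case (Suc r)
  define L where "L = {ns. length ns = r \<and> set ns \<subseteq> A}"
  have eq: "{ns. length ns = Suc r \<and> set ns \<subseteq> A} = (\<lambda>(a,ns). a#ns) ` (A \<times> L)"
    unfolding L_def by (auto simp: length_Suc_conv)
  have inj: "inj_on (\<lambda>(a,ns). a#ns) (A \<times> L)" by (auto simp: inj_on_def)
  have "(\<lambda>(a, ns). f a * prod_list (map f ns)) summable_on Sigma A (\<lambda>_. L)"
  proof (rule summable_on_SigmaI[where g="\<lambda>a. f a * infsum (\<lambda>ns. prod_list (map f ns)) L"])
    show "((\<lambda>y. case (x, y) of (a, ns) \<Rightarrow> f a * prod_list (map f ns)) has_sum f x * infsum (\<lambda>ns. prod_list (map f ns)) L) L" for x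
      using Suc.IH unfolding L_def by (auto intro!: has_sum_cmult_right)
    show "(\<lambda>a. f a * infsum (\<lambda>ns. prod_list (map f ns)) L) summable_on A"
      using sf by (rule summable_on_cmult_left)
  qed (auto simp: nn intro!: prod_list_nonneg mult_nonneg_nonneg)
  then show ?case unfolding eq using inj
    by (subst summable_on_reindex) (auto simp: o_def case_prod_unfold)
qed

lemma zeta_summable:
  assumes "ks = [] \<or> hd ks \<ge> 2" "\<forall>k\<in>set ks. k \<ge> 1"
  shows "zeta_term ks summable_on dec_tuples (length ks) 1"
proof (cases "ks = []")
  case True
  have "dec_tuples 0 1 = {[]}" by (auto simp: dec_tuples_def)
  then show ?thesis using True by simp
next
  case False
  define s where "s = 1 + 1 / real (length ks)"
  have s1: "s > 1" using False by (simp add: s_def)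
  have "(\<lambda>ns. prod_list (map (\<lambda>n. real n powr (-s)) ns)) summable_on {ns. length ns = length ks \<and> set ns \<subseteq> UNIV}"
    by (rule prod_summable) (auto intro: w_summable[OF s1])
  then have "(\<lambda>ns. prod_list (map (\<lambda>n. real n powr (-s)) ns)) summable_on dec_tuples (length ks) 1"
    by (rule summable_on_subset) (auto simp: dec_tuples_def)
  then show ?thesis
    by (rule summable_on_comparison_test)
       (use zt_bound[OF False] assms False in \<open>auto simp: s_def zt_nonneg\<close>)
qed


lemma infsum_dom_conv:
  fixes f :: "nat \<Rightarrow> 'a \<Rightarrow> real"
  assumes g: "g summable_on A"
    and bnd: "\<And>m x. x \<in> A \<Longrightarrow> \<bar>f m x\<bar> \<le> g x"
    and lim: "\<And>x. x \<in> A \<Longrightarrow> (\<lambda>m. f m x) \<longlonglongrightarrow> h x"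
  shows "(\<lambda>m. infsum (f m) A) \<longlonglongrightarrow> infsum h A"
proof -
  have gnn: "x \<in> A \<Longrightarrow> 0 \<le> g x" for x using bnd[of x 0] by linarith
  have hb: "\<bar>h x\<bar> \<le> g x" if "x \<in> A" for x
  proof -
    have "(\<lambda>m. \<bar>f m x\<bar>) \<longlonglongrightarrow> \<bar>h x\<bar>" using lim[OF that] by (rule tendsto_rabs)
    then show ?thesis using bnd[OF that] by (intro LIMSEQ_le_const2) auto
  qed
  have "(\<lambda>x. norm (g x)) summable_on A \<longleftrightarrow> g summable_on A"
    by (rule summable_on_cong) (simp add: gnn)
  then have absg: "(\<lambda>x. norm (g x)) summable_on A"
    using g by simp
  then have ig: "integrable (count_space A) g"
    using abs_summable_equivalent[of g A] by (simp add: abs_summable_on_def)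
  have sf: "(\<lambda>x. norm (f m x)) summable_on A" for m
    by (rule summable_on_comparison_test[OF g]) (auto simp: bnd)
  have sh: "(\<lambda>x. norm (h x)) summable_on A"
    by (rule summable_on_comparison_test[OF g]) (auto simp: hb)
  have e1: "infsum (f m) A = infsetsum (f m) A" for m
    using sf[of m] abs_summable_equivalent[of "f m" A] infsetsum_infsum[of "f m" A] by simp
  have e2: "infsum h A = infsetsum h A"
    using sh abs_summable_equivalent[of h A] infsetsum_infsum[of h A] by simp
  have "(\<lambda>m. integral\<^sup>L (count_space A) (f m)) \<longlonglongrightarrow> integral\<^sup>L (count_space A) h"
  proof (rule integral_dominated_convergence[where w=g])
    show "AE x in count_space A. (\<lambda>i. f i x) \<longlonglongrightarrow> h x" by (rule AE_I2) (simp add: lim)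
    show "AE x in count_space A. norm (f i x) \<le> g x" for i by (rule AE_I2) (simp add: bnd)
  qed (simp_all add: ig)
  then show ?thesis unfolding e1 e2 infsetsum_def .
qed


lemma last_le: "sorted_wrt (\<ge>) a \<Longrightarrow> a \<noteq> [] \<Longrightarrow> x \<in> set a \<Longrightarrow> last a \<le> (x::nat)"
proof -
  assume s: "sorted_wrt (\<ge>) a" and ne: "a \<noteq> []" and x: "x \<in> set a"
  have e: "a = butlast a @ [last a]" using ne by simp
  have "sorted_wrt (\<ge>) (butlast a @ [last a])" using s e by simp
  then have "\<forall>y\<in>set (butlast a). last a \<le> y" by (simp add: sorted_wrt_append)
  moreover have "x \<in> set (butlast a) \<or> x = last a" using x e
    by (metis Un_iff empty_iff empty_set set_ConsD set_append)
  ultimately show ?thesis by auto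
qed

lemma dec_split:
  assumes "r \<ge> 1"
  shows "dec_tuples (r + m) 1 = (\<lambda>(a,b). a @ b) ` (SIGMA a:dec_tuples r 1. CH m (last a))"
proof (intro equalityI subsetI)
  fix c assume c: "c \<in> dec_tuples (r + m) 1"
  define a where "a = take r c"
  define b where "b = drop r c"
  have cab: "c = a @ b" by (simp add: a_def b_def)
  have la: "length a = r" "length b = m" using c by (auto simp: a_def b_def dec_tuples_def)
  have ne: "a \<noteq> []" using la assms by auto
  have sc: "sorted_wrt (\<ge>) (a @ b)" using c cab by (simp add: dec_tuples_def)
  have "last a \<in> set a" using ne by simp
  then have "\<forall>y\<in>set b. y \<le> last a" using sc by (auto simp: sorted_wrt_append)
  then have "(a, b) \<in> (SIGMA a:dec_tuples r 1. CH m (last a))"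
    using c sc la unfolding cab by (auto simp: dec_tuples_def CH_def sorted_wrt_append)
  then show "c \<in> (\<lambda>(a,b). a @ b) ` (SIGMA a:dec_tuples r 1. CH m (last a))"
    unfolding cab by force
next
  fix c assume "c \<in> (\<lambda>(a,b). a @ b) ` (SIGMA a:dec_tuples r 1. CH m (last a))"
  then obtain a b where c: "c = a @ b" and a: "a \<in> dec_tuples r 1" and b: "b \<in> CH m (last a)" by auto
  have ne: "a \<noteq> []" using a assms by (auto simp: dec_tuples_def)
  have "\<forall>x\<in>set a. \<forall>y\<in>set b. y \<le> x"
    using b a last_le[of a] ne by (fastforce simp: CH_def dec_tuples_def)
  then show "c \<in> dec_tuples (r + m) 1"
    using a b c by (auto simp: dec_tuples_def CH_def sorted_wrt_append)
qed

lemma fubini_step: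
  assumes r: "length ks \<ge> 1" and h2: "hd ks \<ge> 2" and k1: "\<forall>k\<in>set ks. k \<ge> 1" and p: "p \<ge> 1"
  shows "zeta_star (ks @ replicate m p) = (\<Sum>\<^sub>\<infinity>a\<in>dec_tuples (length ks) 1. zeta_term ks a * hh p m (last a))"
proof -
  define K where "K = ks @ replicate m p"
  define S where "S = (SIGMA a:dec_tuples (length ks) 1. CH m (last a))"
  define ap where "ap = (\<lambda>(a::nat list,b::nat list). a @ b)"
  have lK: "length K = length ks + m" by (simp add: K_def)
  have eqD: "dec_tuples (length K) 1 = ap ` S"
    unfolding lK S_def ap_def by (rule dec_split[OF r])
  have inj: "inj_on ap S"
    by (auto simp: inj_on_def ap_def S_def dec_tuples_def)
  have ks_ne: "ks \<noteq> []" using r by auto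
  have sK: "zeta_term K summable_on dec_tuples (length K) 1"
    by (rule zeta_summable) (use ks_ne h2 k1 p in \<open>auto simp: K_def\<close>)
  have Fe: "zeta_term K (ap x) = zeta_term ks (fst x) * zeta_term (replicate m p) (snd x)" if "x \<in> S" for x
    using that by (auto simp: K_def ap_def S_def dec_tuples_def zt_append)
  have sS: "(\<lambda>x. zeta_term ks (fst x) * zeta_term (replicate m p) (snd x)) summable_on S"
  proof -
    have "(zeta_term K \<circ> ap) summable_on S" using sK unfolding eqD using summable_on_reindex[OF inj] by blast
    then show ?thesis by (rule summable_on_cong[THEN iffD1, rotated]) (simp add: Fe)
  qed
  have "zeta_star K = infsum (zeta_term K) (ap ` S)"
    unfolding zeta_star_def eqD by (rule refl)
  also have "\<dots> = infsum (zeta_term K \<circ> ap) S" by (rule infsum_reindex[OF inj])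
  also have "\<dots> = infsum (\<lambda>x. zeta_term ks (fst x) * zeta_term (replicate m p) (snd x)) S"
    by (rule infsum_cong) (simp add: Fe)
  also have "\<dots> = (\<Sum>\<^sub>\<infinity>a\<in>dec_tuples (length ks) 1. \<Sum>\<^sub>\<infinity>b\<in>CH m (last a). zeta_term ks a * zeta_term (replicate m p) b)"
    using infsum_Sigma_banach[of "\<lambda>x. zeta_term ks (fst x) * zeta_term (replicate m p) (snd x)" "dec_tuples (length ks) 1" "\<lambda>a. CH m (last a)"]
      sS unfolding S_def by simp
  also have "\<dots> = (\<Sum>\<^sub>\<infinity>a\<in>dec_tuples (length ks) 1. zeta_term ks a * hh p m (last a))"
    by (rule infsum_cong) (simp add: CH_finite chainsum sum_distrib_left[symmetric])
  finally show ?thesis unfolding K_def .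
qed


lemma last_ge1: "a \<in> dec_tuples r 1 \<Longrightarrow> r \<ge> 1 \<Longrightarrow> last a \<ge> 1"
  by (cases a) (auto simp: dec_tuples_def)

lemma split_last:
  assumes r: "length ks \<ge> 1" and h2: "hd ks \<ge> 2" and k1: "\<forall>k\<in>set ks. k \<ge> 1" and p: "p \<ge> 2"
  shows "(\<Sum>\<^sub>\<infinity>a\<in>dec_tuples (length ks) 1. zeta_term ks a * PP p (last a))
       = zeta_star (butlast ks)
         + (\<Sum>\<^sub>\<infinity> ns \<in> dec_tuples (length ks) 2.
                zeta_term ks ns * (\<Prod>l=2..last ns. real l ^ p / (real l ^ p - 1)))"
proof -
  define r where "r = length ks"
  define h where "h = (\<lambda>a. zeta_term ks a * PP p (last a))"
  define D1 where "D1 = dec_tuples r 1"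
  define D2 where "D2 = dec_tuples r 2"
  define app1 where "app1 = (\<lambda>a'::nat list. a' @ [1])"
  define E where "E = app1 ` dec_tuples (r - 1) 1"
  have ks_ne: "ks \<noteq> []" using r by auto
  have sz: "zeta_term ks summable_on D1"
    unfolding D1_def r_def by (rule zeta_summable) (use h2 k1 in auto)
  have sh: "h summable_on D1"
  proof (rule summable_on_comparison_test)
    show "(\<lambda>a. 2 * zeta_term ks a) summable_on D1" using sz by (rule summable_on_cmult_right)
    fix a assume a: "a \<in> D1"
    have "last a \<ge> 1" using last_ge1 a r unfolding D1_def r_def by blast
    then have "PP p (last a) \<le> 2" "PP p (last a) \<ge> 1" using PP_bound PP_ge1 p by auto
    then show "h a \<le> 2 * zeta_term ks a" "0 \<le> h a" unfolding h_def
      using zt_nonneg[of ks a] by (auto simp: mult.commute intro: mult_left_mono)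
  qed
  have D2sub: "D2 \<subseteq> D1" by (auto simp: D1_def D2_def dec_tuples_def)
  have r1: "r \<ge> 1" using r by (simp add: r_def)
  have Esub: "E \<subseteq> D1" using r1 by (auto simp: D1_def E_def app1_def dec_tuples_def sorted_wrt_append)
  have disj: "D2 \<inter> E = {}"
  proof (rule ccontr)
    assume "D2 \<inter> E \<noteq> {}"
    then obtain a where a2: "a \<in> D2" and aE: "a \<in> E" by blast
    from aE obtain a' where "a = a' @ [1]" unfolding E_def app1_def by blast
    then have "(1::nat) \<in> set a" by simp
    moreover have "\<forall>x\<in>set a. 2 \<le> x" using a2 by (simp add: D2_def dec_tuples_def)
    ultimately show False by fastforce
  qed
  have union: "D1 = D2 \<union> E"
  proof (intro equalityI subsetI)
    fix a assume a: "a \<in> D1"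
    have ne: "a \<noteq> []" using a r by (auto simp: D1_def r_def dec_tuples_def)
    have sa: "sorted_wrt (\<ge>) a" using a by (simp add: D1_def dec_tuples_def)
    show "a \<in> D2 \<union> E"
    proof (cases "last a \<ge> 2")
      case True
      then have "\<forall>x\<in>set a. 2 \<le> x" using last_le[OF sa ne] by force
      then show ?thesis using a by (auto simp: D1_def D2_def dec_tuples_def)
    next
      case False
      then have l1: "last a = 1" using last_ge1[of a r] a r by (auto simp: D1_def r_def)
      have e: "a = butlast a @ [1]" using ne l1 by (metis append_butlast_last_id)
      have "sorted_wrt (\<ge>) (butlast a @ [1])" using sa e by simp
      then have "butlast a \<in> dec_tuples (r - 1) 1"
        using a by (auto simp: D1_def dec_tuples_def sorted_wrt_append in_set_butlastD)
      then have "a \<in> E" unfolding E_def app1_def by (subst e) (rule imageI)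
      then show ?thesis by simp
    qed
  qed (use D2sub Esub in auto)
  have injE: "inj_on app1 (dec_tuples (r - 1) 1)" by (auto simp: inj_on_def app1_def)
  have lbk: "length (butlast ks) = r - 1" by (simp add: r_def)
  have hE: "(h \<circ> app1) a' = zeta_term (butlast ks) a'" if "a' \<in> dec_tuples (r - 1) 1" for a'
  proof -
    have la: "length a' = length (butlast ks)" using that lbk by (simp add: dec_tuples_def)
    have "h (app1 a') = zeta_term (butlast ks @ [last ks]) (a' @ [1]) * PP p 1"
      using ks_ne by (simp add: h_def app1_def)
    also have "\<dots> = zeta_term (butlast ks) a'" using la by (simp add: zt_append PP_one)
    finally show ?thesis by simp
  qed
  have "infsum h D1 = infsum h D2 + infsum h E"
    unfolding union by (rule infsum_Un_disjoint[OF _ _ disj])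
      (use sh D2sub Esub union in \<open>auto intro: summable_on_subset\<close>)
  also have "infsum h E = infsum (h \<circ> app1) (dec_tuples (r - 1) 1)"
    unfolding E_def by (rule infsum_reindex[OF injE])
  also have "\<dots> = zeta_star (butlast ks)"
    unfolding zeta_star_def lbk by (rule infsum_cong) (rule hE)
  finally show ?thesis
    by (simp add: h_def D1_def D2_def r_def PP_def add.commute)
qed

theorem proposition6p1:
  fixes ks :: "nat list" and p :: nat
  assumes "length ks \<ge> 1" and "p \<ge> 2" and "hd ks \<ge> 2"
    and "\<forall>k\<in>set ks. k \<ge> 1"
  shows "(\<lambda>m. zeta_star (ks @ replicate m p)) \<longlonglongrightarrow>
           zeta_star (butlast ks)
           + (\<Sum>\<^sub>\<infinity> ns \<in> dec_tuples (length ks) 2.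
                zeta_term ks ns * (\<Prod>l=2..last ns. real l ^ p / (real l ^ p - 1)))"
proof -
  have p1: "p \<ge> 1" using assms by simp
  have eq: "(\<lambda>m. zeta_star (ks @ replicate m p)) =
        (\<lambda>m. \<Sum>\<^sub>\<infinity>a\<in>dec_tuples (length ks) 1. zeta_term ks a * hh p m (last a))"
    using fubini_step[OF assms(1) assms(3) assms(4) p1] by auto
  have sz: "zeta_term ks summable_on dec_tuples (length ks) 1"
    by (rule zeta_summable) (use assms in auto)
  have "(\<lambda>m. \<Sum>\<^sub>\<infinity>a\<in>dec_tuples (length ks) 1. zeta_term ks a * hh p m (last a))
        \<longlonglongrightarrow> (\<Sum>\<^sub>\<infinity>a\<in>dec_tuples (length ks) 1. zeta_term ks a * PP p (last a))"
  proof (rule infsum_dom_conv[where g="\<lambda>a. 2 * zeta_term ks a"])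
    show "(\<lambda>a. 2 * zeta_term ks a) summable_on dec_tuples (length ks) 1"
      using sz by (rule summable_on_cmult_right)
  next
    fix m a assume a: "a \<in> dec_tuples (length ks) 1"
    have l: "last a \<ge> 1" using last_ge1 a assms(1) by blast
    have "hh p m (last a) \<le> 2" using hh_le_PP[OF p1 l, of m] PP_bound[OF assms(2) l] by linarith
    then show "\<bar>zeta_term ks a * hh p m (last a)\<bar> \<le> 2 * zeta_term ks a"
      using zt_nonneg[of ks a] hh_nonneg[of p m "last a"]
      by (simp add: abs_mult mult.commute mult_left_mono)
  next
    fix a assume a: "a \<in> dec_tuples (length ks) 1"
    have l: "last a \<ge> 1" using last_ge1 a assms(1) by blast
    show "(\<lambda>m. zeta_term ks a * hh p m (last a)) \<longlonglongrightarrow> zeta_term ks a * PP p (last a)"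
      by (intro tendsto_mult tendsto_const hh_lim[OF p1 l])
  qed
  then show ?thesis
    unfolding eq split_last[OF assms(1) assms(3) assms(4) assms(2)] .
qed

end
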